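(* Let $p = 2^n$ and let $f, g$ be univariate polynomials over a ring, each of degree $p-1$. Consider computing (part of) the product $f g$ by the clipped Karatsuba method described in the context, recursing down to single coefficients. Let $\ell$ be a natural number with $2^\ell < p$. If only the top $1/2^\ell$ fraction of the coefficients of $fg$ is required (equivalently, if only the bottom $1/2^\ell$ fraction is required), then the number of coefficient multiplications required is at most $K(p)/3^{\ell-1}$, where $K(p) = p^{\log_2 3}$ is the number of coefficient multiplications used by full (unclipped) Karatsuba multiplication of two polynomials with $p$ coefficients.
   Context: Karatsuba multiplication: for $f, g$ with $p$ coefficients ($p$ even), write $f = f_h x^{p/2} + f_l$, $g = g_h x^{p/2} + g_l$ with $f_h,f_l,g_h,g_l$ having $p/2$ coefficients, and put $f_m = f_h + f_l$, $g_m = g_h + g_l$. Then $fg = z_h x^p + z_m x^{p/2} + z_l$ with $z_h = f_h g_h$, $z_l = f_l g_l$, $z_m = f_m g_m - f_h g_h - f_l g_l$; the three products $f_h g_h$, $f_m g_m$, $f_l g_l$ are computed recursively, and a product of two one-coefficient polynomials costs one coefficient multiplication. Thus $K(1)=1$, $K(p) = 3K(p/2)$, so $K(p)=p^{\log_2 3}=3^n$. Clipped Karatsuba: when only a specified range of coefficients of $fg$ is required, only those of the three sub-products $f_hg_h$, $f_mg_m$, $f_lg_l$ (and only those of their coefficients) that are needed to form the required coefficients of $fg$ are computed, each again by clipped Karatsuba recursively; sub-products that are not needed are not computed at all. *)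

theory Defs
  imports Complex_Main
begin

text \<open>Clipped Karatsuba cost. ck n S is the number of coefficient multiplications
performed by clipped Karatsuba when multiplying two polynomials with 2^n coefficients
each and only the coefficients of the product with index in S are required
(indices of the product range over 0 .. 2^(n+1)-2; indices outside are ignored).
For n = Suc m: the halves have h = 2^m coefficients, each sub-product has
coefficient indices 0 .. 2h-2. Coefficient k of fg is
zh[k-2h] + zm[k-h] + zl[k], with zm = fm gm - fh gh - fl gl.\<close>

fun ck :: "nat \<Rightarrow> nat set \<Rightarrow> nat" where
  "ck 0 S = (if 0 \<in> S then 1 else 0)"
| "ck (Suc m) S =
    (let h = (2::nat) ^ m;
         R = {..< 2 * h - 1};
         Sm = {j \<in> R. j + h \<in> S};
         Sh = {j \<in> R. j + 2 * h \<in> S} \<union> Sm;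
         Sl = {j \<in> R. j \<in> S} \<union> Sm
     in ck m Sh + ck m Sm + ck m Sl)"

fun K :: "nat \<Rightarrow> nat" where
  "K 0 = 1"
| "K (Suc m) = 3 * K m"

end

theory Submission
  imports Defs
begin

lemma ck_empty: "ck n {} = 0"
  by (induction n) (auto simp: Let_def)

lemma ck_mono: "A \<subseteq> B \<Longrightarrow> ck n A \<le> ck n B"
proof (induction n arbitrary: A B)
  case 0 then show ?case by (auto split: if_splits)
next
  case (Suc m)
  show ?case unfolding ck.simps Let_def
    by (intro add_mono Suc.IH) (use Suc.prems in auto)
qed

lemma ck_le: "ck n S \<le> 3 ^ n"
proof (induction n arbitrary: S)
  case 0 then show ?case by (auto split: if_splits)
next
  case (Suc m)
  have "ck (Suc m) S \<le> 3^m + 3^m + 3^m"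
    unfolding ck.simps Let_def by (intro add_mono Suc.IH)
  then show ?case by simp
qed

lemma K_eq: "K n = 3 ^ n"
  by (induction n) auto

lemma top_bound: "1 \<le> l \<Longrightarrow> l < n \<Longrightarrow>
  ck n {2^(n+1) - 2^(n+1-l) ..< 2^(n+1)} \<le> 3^(n+1-l)"
proof (induction n arbitrary: l)
  case 0 then show ?case by (auto split: if_splits)
next
  case (Suc m)
  show ?case
  proof (cases "l = 1")
    case True
    then have "Suc m + 1 - l = Suc m" by simp
    then show ?thesis by (simp only:) (rule ck_le)
  next
    case False
    define h :: nat where "h = 2^m"
    define q :: nat where "q = 2^(m+1-(l-1))"
    have h1: "h \<ge> 1" unfolding h_def by simp
    have "m+1-(l-1) \<le> m" using False Suc.prems by auto
    then have qh: "q \<le> h" unfolding q_def h_def by (simp add: power_increasing)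
    have e1: "(2::nat)^(Suc m + 1) = 4*h" unfolding h_def by simp
    have e2: "(2::nat)^(Suc m + 1 - l) = q" unfolding q_def using Suc.prems False
      by (simp add: Suc_diff_le)
    have e3: "(2::nat)^(m+1) = 2*h" unfolding h_def by simp
    let ?S = "{4*h - q ..< 4*h}"
    have Sm: "{j \<in> {..<2*h-1}. j + h \<in> ?S} = {}" using qh by auto
    have Sl: "{j \<in> {..<2*h-1}. j \<in> ?S} = {}" using qh by auto
    have Sh: "{j \<in> {..<2*h-1}. j + 2*h \<in> ?S} \<subseteq> {2*h - q ..< 2*h}" using qh by auto
    have "ck (Suc m) ?S = ck m ({j \<in> {..<2*h-1}. j + 2*h \<in> ?S})"
      unfolding ck.simps Let_def h_def[symmetric] Sm Sl by (simp add: ck_empty)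
    also have "\<dots> \<le> ck m {2*h - q ..< 2*h}" using Sh ck_mono by blast
    also have "\<dots> \<le> 3^(m+1-(l-1))"
      using Suc.IH[of "l-1"] Suc.prems False unfolding e3 q_def by auto
    also have "\<dots> = 3^(Suc m + 1 - l)" using Suc.prems by (simp add: Suc_diff_le)
    finally have "ck (Suc m) ?S \<le> 3^(Suc m + 1 - l)" .
    then show ?thesis unfolding e1 e2 .
  qed
qed

lemma bot_bound: "1 \<le> l \<Longrightarrow> l < n \<Longrightarrow>
  ck n {..< 2^(n+1-l)} \<le> 3^(n+1-l)"
proof (induction n arbitrary: l)
  case 0 then show ?case by auto
next
  case (Suc m)
  show ?case
  proof (cases "l = 1")
    case True
    then have "Suc m + 1 - l = Suc m" by simp
    then show ?thesis by (simp only:) (rule ck_le)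
  next
    case False
    define h :: nat where "h = 2^m"
    define q :: nat where "q = 2^(m+1-(l-1))"
    have h1: "h \<ge> 1" unfolding h_def by simp
    have "m+1-(l-1) \<le> m" using False Suc.prems by auto
    then have qh: "q \<le> h" unfolding q_def h_def by (simp add: power_increasing)
    have e2: "(2::nat)^(Suc m + 1 - l) = q" unfolding q_def using Suc.prems False
      by (simp add: Suc_diff_le)
    let ?S = "{..< q}"
    have Sm: "{j \<in> {..<2*h-1}. j + h \<in> ?S} = {}" using qh by auto
    have Sh: "{j \<in> {..<2*h-1}. j + 2*h \<in> ?S} = {}" using qh by auto
    have Sl: "{j \<in> {..<2*h-1}. j \<in> ?S} \<subseteq> ?S" by auto
    have "ck (Suc m) ?S = ck m ({j \<in> {..<2*h-1}. j \<in> ?S})"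
      unfolding ck.simps Let_def h_def[symmetric] Sm Sh by (simp add: ck_empty)
    also have "\<dots> \<le> ck m ?S" using Sl ck_mono by blast
    also have "\<dots> \<le> 3^(m+1-(l-1))"
      using Suc.IH[of "l-1"] Suc.prems False unfolding q_def by auto
    also have "\<dots> = 3^(Suc m + 1 - l)" using Suc.prems by (simp add: Suc_diff_le)
    finally have "ck (Suc m) ?S \<le> 3^(Suc m + 1 - l)" .
    then show ?thesis unfolding e2 .
  qed
qed

theorem theorem1:
  fixes n l :: nat and S :: "nat set"
  assumes "(2::nat) ^ l < 2 ^ n"
    and "S = {2 ^ (n+1) - 2 ^ (n+1) div 2 ^ l ..< 2 ^ (n+1)}
         \<or> S = {..< 2 ^ (n+1) div 2 ^ l}"
  shows "real (ck n S) \<le> real (K n) / 3 powi (int l - 1)"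
proof -
  have ln: "l < n" using assms(1) by simp
  have d: "(2::nat) ^ (n+1) div 2 ^ l = 2 ^ (n+1-l)" using ln by (simp add: power_diff)
  show ?thesis
  proof (cases "l = 0")
    case True
    have "real (ck n S) \<le> real (K n)" using ck_le[of n S] K_eq[of n] by simp
    also have "\<dots> \<le> real (K n) / 3 powi (int l - 1)" using True by simp
    finally show ?thesis .
  next
    case False
    have b: "ck n S \<le> 3^(n+1-l)"
      using assms(2) top_bound[of l n] bot_bound[of l n] False ln unfolding d by auto
    have il: "int l - 1 = int (l - 1)" using False by simp
    have p: "(3::real) powi (int l - 1) = 3^(l-1)" unfolding il by (rule power_int_of_nat)
    have ne: "n = (n+1-l) + (l-1)" using False ln by simp
    have "(3::real)^n = 3^(n+1-l) * 3^(l-1)" by (subst ne) (rule power_add)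
    then have "real (K n) / 3 powi (int l - 1) = 3^(n+1-l)" unfolding p K_eq by simp
    moreover have "real (ck n S) \<le> 3^(n+1-l)" using b
      by (metis of_nat_le_iff of_nat_numeral of_nat_power)
    ultimately show ?thesis by simp
  qed
qed

end
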